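(* Let $A=\mathrm{diag}(G_1,\dots,G_m,[1])\in\mathbb{R}^{n\times n}$, $m\geq1$ (trailing block $[1]$ possibly absent), with $G_j=\begin{bmatrix}c_j&s_j\\-s_j&c_j\end{bmatrix}$, $c_j^2+s_j^2=1$, $s_j\neq 0$, $0<c_1<\cdots<c_m<1$. Let $v_0$ be a unit norm vector with $d(A,v_0)\geq 2$ and $v_0^{(1)}\neq 0$, and let $v_*$ be the limit of the sequence $\{v_k\}$ of the iteration ACI($1$) below. Then $$\min_{\alpha\in\mathbb{R}}\|A-\alpha I\|=\|A-c_1I\|=\|Av_*-c_1v_*\|=(1-c_1^2)^{1/2},$$ i.e. $v_*$ attains the value of the ideal Arnoldi problem $\min_{\alpha\in\mathbb{R}}\|A-\alpha I\|$.
   Context: Block partitioning: $v=[v^{(1)};\dots;v^{(m)};v^{(m+1)}]$ with $v^{(j)}\in\mathbb{R}^2$ for $j\leq m$ (conforming with $G_j$) and $v^{(m+1)}\in\mathbb{R}$ present only if the block $[1]$ is. ACI($1$): for $k=0,1,2,\dots$: $\widetilde w_k=(A-\alpha_kI)v_k$ with $\alpha_k=v_k^TAv_k$; $w_k=\widetilde w_k/\|\widetilde w_k\|$; $\widetilde v_{k+1}=(A^T-\beta_kI)w_k$ with $\beta_k=w_k^TAw_k$; $v_{k+1}=\widetilde v_{k+1}/\|\widetilde v_{k+1}\|$. $d(A,v)$ is the grade of $v$ w.r.t. $A$; $\|\cdot\|$ is the Euclidean vector norm and the induced spectral matrix norm. *)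

theory Defs
  imports Complex_Main
begin

text \<open>Vectors of length n are functions nat => real (only indices < n matter);
  n x n matrices are functions nat => nat => real (only indices < n matter).
  Indices are 0-based.\<close>

definition matvec :: "nat \<Rightarrow> (nat \<Rightarrow> nat \<Rightarrow> real) \<Rightarrow> (nat \<Rightarrow> real) \<Rightarrow> (nat \<Rightarrow> real)" where
  "matvec n M x = (\<lambda>i. if i < n then (\<Sum>j<n. M i j * x j) else 0)"

definition vnorm :: "nat \<Rightarrow> (nat \<Rightarrow> real) \<Rightarrow> real" where
  "vnorm n x = sqrt (\<Sum>i<n. (x i)\<^sup>2)"

definition dotp :: "nat \<Rightarrow> (nat \<Rightarrow> real) \<Rightarrow> (nat \<Rightarrow> real) \<Rightarrow> real" where
  "dotp n x y = (\<Sum>i<n. x i * y i)"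

definition transp :: "(nat \<Rightarrow> nat \<Rightarrow> real) \<Rightarrow> (nat \<Rightarrow> nat \<Rightarrow> real)" where
  "transp M = (\<lambda>i j. M j i)"

definition idm :: "nat \<Rightarrow> nat \<Rightarrow> real" where
  "idm = (\<lambda>i j. if i = j then 1 else 0)"

definition opnorm :: "nat \<Rightarrow> (nat \<Rightarrow> nat \<Rightarrow> real) \<Rightarrow> real" where
  "opnorm n M = Sup {vnorm n (matvec n M x) | x. vnorm n x = 1}"

definition grade :: "nat \<Rightarrow> (nat \<Rightarrow> nat \<Rightarrow> real) \<Rightarrow> (nat \<Rightarrow> real) \<Rightarrow> nat" where
  "grade n M v = (LEAST d. \<exists>c :: nat \<Rightarrow> real. \<forall>i<n.
      ((matvec n M ^^ d) v) i = (\<Sum>j<d. c j * ((matvec n M ^^ j) v) i))"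

definition aci_step :: "nat \<Rightarrow> (nat \<Rightarrow> nat \<Rightarrow> real) \<Rightarrow> (nat \<Rightarrow> real) \<Rightarrow> (nat \<Rightarrow> real)" where
  "aci_step n A v =
    (let \<alpha> = dotp n v (matvec n A v);
         wt = (\<lambda>i. matvec n A v i - \<alpha> * v i);
         w = (\<lambda>i. wt i / vnorm n wt);
         \<beta> = dotp n w (matvec n A w);
         vt = (\<lambda>i. matvec n (transp A) w i - \<beta> * w i)
     in (\<lambda>i. vt i / vnorm n vt))"

definition aci :: "nat \<Rightarrow> (nat \<Rightarrow> nat \<Rightarrow> real) \<Rightarrow> (nat \<Rightarrow> real) \<Rightarrow> nat \<Rightarrow> (nat \<Rightarrow> real)" where
  "aci n A v0 k = (aci_step n A ^^ k) v0"

text \<open>A = diag(G_1,...,G_m,[1]) with G_j = [[c_j, s_j], [-s_j, c_j]];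
  block j (0-based, j < m) occupies indices 2j, 2j+1; the trailing [1]
  (present iff trail) sits at index 2m.\<close>
definition blockA :: "nat \<Rightarrow> bool \<Rightarrow> (nat \<Rightarrow> real) \<Rightarrow> (nat \<Rightarrow> real) \<Rightarrow> nat \<Rightarrow> nat \<Rightarrow> real" where
  "blockA m trail c s = (\<lambda>i k.
     if i < 2*m \<and> k < 2*m \<and> i div 2 = k div 2 then
       (if even i \<and> even k then c (i div 2)
        else if even i \<and> odd k then s (i div 2)
        else if odd i \<and> even k then - s (i div 2)
        else c (i div 2))
     else if trail \<and> i = 2*m \<and> k = 2*m then 1 else 0)"

definition dimA :: "nat \<Rightarrow> bool \<Rightarrow> nat" where
  "dimA m trail = 2*m + (if trail then 1 else 0)"

end

theory Submission imports Defs begin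

lemma sum_blocks2: "(\<Sum>i<2*(m::nat). g i) = (\<Sum>j<m. g (2*j) + g (2*j+1))"
  by (induction m) (auto simp: sum.lessThan_Suc add.assoc)

lemma sum_blocks: "(\<Sum>i<dimA m trail. g i) = (\<Sum>j<m. g (2*j) + g (2*j+1)) + (if trail then g (2*m) else 0)"
  by (auto simp: dimA_def sum_blocks2 simp flip: Suc_eq_plus1)

locale blk =
  fixes m :: nat and trail :: bool and c s :: "nat \<Rightarrow> real"
  assumes m1: "m \<ge> 1" and cs: "\<forall>j<m. (c j)\<^sup>2 + (s j)\<^sup>2 = 1" and c0pos: "0 < c 0"
    and mono: "\<forall>i j. i < j \<and> j < m \<longrightarrow> c i < c j" and clt1: "c (m - 1) < 1"
begin

abbreviation "NN \<equiv> dimA m trail"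
abbreviation "AA \<equiv> blockA m trail c s"

lemma c_lt1: "j < m \<Longrightarrow> c j < 1"
  using mono[rule_format, of j "m-1"] clt1 by (cases "j = m - 1") force+

lemma c_ge0: "j < m \<Longrightarrow> c 0 \<le> c j"
  using mono[rule_format, of 0 j] by (cases "j = 0") auto

lemma c0lt1: "c 0 < 1" using c_lt1 m1 by auto

definition Lm :: "real \<Rightarrow> real \<Rightarrow> (nat \<Rightarrow> real) \<Rightarrow> nat \<Rightarrow> real" where
  "Lm \<sigma> \<alpha> v i = (if i < 2*m then (if even i then (c (i div 2) - \<alpha>) * v i + \<sigma> * s (i div 2) * v (Suc i)
     else (c (i div 2) - \<alpha>) * v i - \<sigma> * s (i div 2) * v (i - 1))
     else if trail \<and> i = 2*m then (1 - \<alpha>) * v i else 0)"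

lemma div2_eq: "even (i::nat) \<Longrightarrow> (j div 2 = i div 2) = (j = i \<or> j = Suc i)"
  by presburger

lemma div2_eq': "odd (i::nat) \<Longrightarrow> (j div 2 = i div 2) = (j = i \<or> j = i - 1)"
  by presburger

lemma blockA_alt: "AA i j = (if i < 2*m then (if j = i then c (i div 2) else if even i \<and> j = Suc i then 1 * s (i div 2)
   else if odd i \<and> j = i - 1 then - (1 * s (i div 2)) else 0) else if trail \<and> i = 2*m \<and> j = 2*m then 1 else 0)"
proof (cases "i < 2*m")
  case True
  show ?thesis
  proof (cases "even i")
    case e: True
    then have "Suc i < 2*m" using True by (auto elim!: evenE)
    then show ?thesis using True e div2_eq[OF e, of j] unfolding blockA_def by auto
  next
    case o: False
    then show ?thesis using True div2_eq'[OF o, of j] unfolding blockA_def by auto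
  qed
qed (auto simp: blockA_def)

lemma blockAT_alt: "transp AA i j = (if i < 2*m then (if j = i then c (i div 2) else if even i \<and> j = Suc i then (-1) * s (i div 2)
   else if odd i \<and> j = i - 1 then - ((-1) * s (i div 2)) else 0) else if trail \<and> i = 2*m \<and> j = 2*m then 1 else 0)"
proof (cases "i < 2*m")
  case True
  show ?thesis
  proof (cases "even i")
    case e: True
    then have "Suc i < 2*m" using True by (auto elim!: evenE)
    then show ?thesis using True e div2_eq[OF e, of j] div2_eq'[of "Suc i" i] unfolding blockA_def transp_def by auto
  next
    case o: False
    then have "i - 1 < 2*m" "even (i - 1)" "Suc (i - 1) = i" using True by (auto elim!: oddE)
    then show ?thesis using True o div2_eq'[OF o, of j] div2_eq[of "i - 1" i] unfolding blockA_def transp_def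
      by auto
  qed
qed (auto simp: blockA_def transp_def)


lemma mv_gen:
  assumes M: "\<And>i j. M i j = (if i < 2*m then (if j = i then c (i div 2) else if even i \<and> j = Suc i then \<sigma> * s (i div 2)
   else if odd i \<and> j = i - 1 then - (\<sigma> * s (i div 2)) else 0) else if trail \<and> i = 2*m \<and> j = 2*m then 1 else 0)"
    and i: "i < NN"
  shows "matvec NN M v i - \<alpha> * v i = Lm \<sigma> \<alpha> v i"
proof (cases "i < 2*m")
  case True
  have "(\<Sum>j<NN. M i j * v j) = (\<Sum>j<NN. (if j = i then c (i div 2) * v j else 0)
     + (if even i \<and> j = Suc i then \<sigma> * s (i div 2) * v j else 0) + (if odd i \<and> j = i - 1 then - (\<sigma> * s (i div 2)) * v j else 0))"
    using odd_pos[of i] by (intro sum.cong) (auto simp: M True)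
  also have "\<dots> = c (i div 2) * v i + (if even i then \<sigma> * s (i div 2) * v (Suc i) else 0)
      + (if odd i then - (\<sigma> * s (i div 2)) * v (i - 1) else 0)"
  proof -
    have a: "Suc i < NN" if "even i" using that True by (auto simp: dimA_def elim!: evenE)
    have b: "i - 1 < NN" using i by auto
    show ?thesis using i a b by (simp add: sum.distrib sum.If_cases)
  qed
  finally show ?thesis using i True by (auto simp: matvec_def Lm_def algebra_simps)
next
  case False
  then have t: "trail" "i = 2*m" using i by (auto simp: dimA_def split: if_splits)
  have "(\<Sum>j<NN. M i j * v j) = (\<Sum>j<NN. (if j = 2*m then v j else 0))"
    by (rule sum.cong) (auto simp: M t)
  also have "\<dots> = v i" using i t by simp
  finally show ?thesis unfolding matvec_def Lm_def using i t by (simp add: left_diff_distrib)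
qed

lemma mvA: "i < NN \<Longrightarrow> matvec NN AA v i - \<alpha> * v i = Lm 1 \<alpha> v i"
  by (rule mv_gen[OF blockA_alt])

lemma mvAT: "i < NN \<Longrightarrow> matvec NN (transp AA) v i - \<alpha> * v i = Lm (-1) \<alpha> v i"
  by (rule mv_gen[OF blockAT_alt])

lemma mv_shift: "i < NN \<Longrightarrow> matvec NN (\<lambda>i j. M i j - \<alpha> * idm i j) v i = matvec NN M v i - \<alpha> * v i"
proof -
  assume i: "i < NN"
  have "(\<Sum>j<NN. (M i j - \<alpha> * idm i j) * v j) = (\<Sum>j<NN. M i j * v j) - (\<Sum>j<NN. (if j = i then \<alpha> * v j else 0))"
  proof -
    have "(\<Sum>j<NN. (M i j - \<alpha> * idm i j) * v j) = (\<Sum>j<NN. M i j * v j - (if j = i then \<alpha> * v j else 0))"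
      by (rule sum.cong) (auto simp: idm_def algebra_simps)
    then show ?thesis by (simp only: sum_subtractf)
  qed
  also have "\<dots> = (\<Sum>j<NN. M i j * v j) - \<alpha> * v i" using i by simp
  finally show ?thesis using i by (simp add: matvec_def)
qed

definition bm :: "(nat \<Rightarrow> real) \<Rightarrow> nat \<Rightarrow> real" where "bm v j = (v (2*j))\<^sup>2 + (v (2*j+1))\<^sup>2"
definition tr :: "(nat \<Rightarrow> real) \<Rightarrow> real" where "tr v = (if trail then (v (2*m))\<^sup>2 else 0)"
definition sq :: "(nat \<Rightarrow> real) \<Rightarrow> real" where "sq v = (\<Sum>i<NN. (v i)\<^sup>2)"
definition P :: "(nat \<Rightarrow> real) \<Rightarrow> real" where "P v = bm v 0"
definition Q :: "(nat \<Rightarrow> real) \<Rightarrow> real" where "Q v = (\<Sum>j\<in>{1..<m}. bm v j) + tr v"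

lemma bm_nn: "bm v j \<ge> 0" by (simp add: bm_def)
lemma tr_nn: "tr v \<ge> 0" by (simp add: tr_def)
lemma Q_nn: "Q v \<ge> 0" by (simp add: Q_def sum_nonneg bm_nn tr_nn)
lemma P_nn: "P v \<ge> 0" by (simp add: P_def bm_nn)

lemma sq_blocks: "sq v = (\<Sum>j<m. bm v j) + tr v"
  unfolding sq_def sum_blocks bm_def tr_def by simp

lemma sum_split0: "(\<Sum>j<m. f j) = f 0 + (\<Sum>j\<in>{1..<m}. f j)"
proof -
  have "{..<m} = insert 0 {1..<m}" using m1 by auto
  then show ?thesis by simp
qed

lemma sq_PQ: "sq v = P v + Q v"
  by (simp add: sq_blocks sum_split0 P_def Q_def add.assoc)

lemma vnorm_sq: "(vnorm NN v)\<^sup>2 = sq v"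
  by (simp add: vnorm_def sq_def sum_nonneg)

lemma vnorm_sq': "vnorm NN v = sqrt (sq v)"
  by (simp add: vnorm_def sq_def)

lemma bm_cong: "\<forall>i<NN. u i = u' i \<Longrightarrow> j < m \<Longrightarrow> bm u j = bm u' j"
  by (simp add: bm_def dimA_def)
lemma tr_cong: "\<forall>i<NN. u i = u' i \<Longrightarrow> tr u = tr u'"
  by (simp add: tr_def dimA_def)
lemma P_cong: "\<forall>i<NN. u i = u' i \<Longrightarrow> P u = P u'"
  using m1 by (simp add: P_def bm_cong)
lemma Q_cong: "\<forall>i<NN. u i = u' i \<Longrightarrow> Q u = Q u'"
  unfolding Q_def by (simp add: tr_cong[of u u'] bm_cong[of u u'])
lemma sq_cong: "\<forall>i<NN. u i = u' i \<Longrightarrow> sq u = sq u'"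
  unfolding sq_def by simp

lemma Lm_bm: assumes "j < m" "\<sigma>\<^sup>2 = 1"
  shows "bm (Lm \<sigma> \<alpha> v) j = (1 - 2*\<alpha>*c j + \<alpha>\<^sup>2) * bm v j"
proof -
  have d: "(2*j) div 2 = j" "(2*j+1) div 2 = j" "2*j < 2*m" "2*j+1 < 2*m"
    using assms by auto
  have cs1: "(c j)\<^sup>2 + (s j)\<^sup>2 = 1" using cs assms by auto
  have l1: "Lm \<sigma> \<alpha> v (2*j) = (c j - \<alpha>) * v (2*j) + \<sigma> * s j * v (2*j+1)"
    unfolding Lm_def using d by simp
  have l2: "Lm \<sigma> \<alpha> v (2*j+1) = (c j - \<alpha>) * v (2*j+1) - \<sigma> * s j * v (2*j)"
    unfolding Lm_def using d by simp
  have e: "((c j - \<alpha>) * a + \<sigma> * s j * b)\<^sup>2 + ((c j - \<alpha>) * b - \<sigma> * s j * a)\<^sup>2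
     = ((c j - \<alpha>)\<^sup>2 + \<sigma>\<^sup>2 * (s j)\<^sup>2) * (a\<^sup>2 + b\<^sup>2)" for a b
    by (simp add: power2_eq_square algebra_simps)
  have f: "(c j - \<alpha>)\<^sup>2 + \<sigma>\<^sup>2 * (s j)\<^sup>2 = 1 - 2*\<alpha>*c j + \<alpha>\<^sup>2"
    using cs1 assms(2) by (simp add: power2_diff)
  show ?thesis unfolding bm_def l1 l2 e f ..
qed

lemma Lm_tr: "tr (Lm \<sigma> \<alpha> v) = (1 - \<alpha>)\<^sup>2 * tr v"
  unfolding tr_def Lm_def by (simp add: power_mult_distrib)

lemma dot_formula: "dotp NN v (matvec NN AA v) = (\<Sum>j<m. c j * bm v j) + tr v"
proof -
  have "dotp NN v (matvec NN AA v) = (\<Sum>i<NN. v i * Lm 1 0 v i)"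
    unfolding dotp_def by (rule sum.cong) (auto simp: mvA[of _ v 0, simplified])
  also have "\<dots> = (\<Sum>j<m. c j * bm v j) + tr v"
    unfolding sum_blocks
  proof -
    have "\<And>j. j < m \<Longrightarrow> v (2*j) * Lm 1 0 v (2*j) + v (2*j+1) * Lm 1 0 v (2*j+1) = c j * bm v j"
    proof -
      fix j assume j: "j < m"
      have d: "(2*j) div 2 = j" "(2*j+1) div 2 = j" "2*j < 2*m" "2*j+1 < 2*m" using j by auto
      show "v (2*j) * Lm 1 0 v (2*j) + v (2*j+1) * Lm 1 0 v (2*j+1) = c j * bm v j"
        unfolding Lm_def bm_def using d by (simp add: power2_eq_square algebra_simps)
    qed
    then show "(\<Sum>j<m. v (2*j) * Lm 1 0 v (2*j) + v (2*j+1) * Lm 1 0 v (2*j+1)) +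
      (if trail then v (2*m) * Lm 1 0 v (2*m) else 0) = (\<Sum>j<m. c j * bm v j) + tr v"
      unfolding tr_def Lm_def by (simp add: power2_eq_square)
  qed
  finally show ?thesis .
qed

lemma sq_Lm: "\<sigma>\<^sup>2 = 1 \<Longrightarrow> sq (Lm \<sigma> \<alpha> v) = (\<Sum>j<m. (1 - 2*\<alpha>*c j + \<alpha>\<^sup>2) * bm v j) + (1-\<alpha>)\<^sup>2 * tr v"
  by (simp add: sq_blocks Lm_bm Lm_tr)

definition "\<gamma> = (if 2 \<le> m then c 1 else 1)"
definition "\<theta> = 1 - c 0 * (\<gamma> - c 0)"

lemma gamma_props: "c 0 < \<gamma>" "\<gamma> \<le> 1" "\<And>j. 1 \<le> j \<Longrightarrow> j < m \<Longrightarrow> \<gamma> \<le> c j"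
proof -
  show "c 0 < \<gamma>" using mono c0lt1 by (auto simp: \<gamma>_def)
  show "\<gamma> \<le> 1" using c_lt1[of 1] by (auto simp: \<gamma>_def)
  fix j assume "1 \<le> j" "j < m"
  then show "\<gamma> \<le> c j" using mono[rule_format, of 1 j] by (cases "j = 1") (auto simp: \<gamma>_def)
qed

lemma theta_props: "0 \<le> \<theta>" "\<theta> < 1"
proof -
  have a: "0 < \<gamma> - c 0" "\<gamma> - c 0 \<le> 1" using gamma_props c0pos by auto
  have "c 0 * (\<gamma> - c 0) \<le> 1 * 1" using a c0pos c0lt1 by (intro mult_mono) auto
  then show "0 \<le> \<theta>" by (simp add: \<theta>_def)
  have "0 < c 0 * (\<gamma> - c 0)" using a c0pos by simp
  then show "\<theta> < 1" by (simp add: \<theta>_def)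
qed

lemma key_ineq: assumes "c 0 \<le> \<alpha>" "\<alpha> \<le> 1" "\<gamma> \<le> x"
  shows "1 - 2*\<alpha>*x + \<alpha>\<^sup>2 \<le> \<theta> * (1 - 2*\<alpha>*c 0 + \<alpha>\<^sup>2)"
proof -
  define f0 where "f0 = 1 - 2*\<alpha>*c 0 + \<alpha>\<^sup>2"
  define d where "d = c 0 * (\<gamma> - c 0)"
  have d0: "0 \<le> d" using gamma_props c0pos by (simp add: d_def)
  have "c 0 * (\<gamma> - c 0) \<le> \<alpha> * (x - c 0)"
    using assms c0pos gamma_props by (intro mult_mono) auto
  then have h1: "1 - 2*\<alpha>*x + \<alpha>\<^sup>2 \<le> f0 - 2 * d" by (simp add: f0_def d_def algebra_simps)
  have "\<alpha>\<^sup>2 \<le> 1" using assms c0pos by (intro power_le_one) auto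
  moreover have "0 \<le> \<alpha> * c 0" using assms c0pos by simp
  ultimately have "f0 \<le> 2" by (simp add: f0_def)
  then have "d * f0 \<le> d * 2" using d0 by (simp add: mult_left_mono)
  then have "f0 - 2 * d \<le> \<theta> * f0" by (simp add: \<theta>_def d_def algebra_simps)
  with h1 show ?thesis by (simp add: f0_def)
qed

lemma f0_pos: "0 < 1 - 2*\<alpha>*c 0 + \<alpha>\<^sup>2"
proof -
  have "1 - 2*\<alpha>*c 0 + \<alpha>\<^sup>2 = (\<alpha> - c 0)\<^sup>2 + (1 - (c 0)\<^sup>2)" by (simp add: power2_diff)
  moreover have "(c 0)\<^sup>2 < 1" using c0pos c0lt1 by (simp add: power_less_one_iff abs_square_less_1)
  ultimately show ?thesis by (smt (verit) zero_le_power2)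
qed

lemma half_P: assumes "\<sigma>\<^sup>2 = 1" "\<forall>i<NN. u i = Lm \<sigma> \<alpha> v i"
  shows "P u = (1 - 2*\<alpha>*c 0 + \<alpha>\<^sup>2) * P v"
  using P_cong[OF assms(2)] Lm_bm[OF _ assms(1), of 0] m1 by (simp add: P_def)

lemma half_Q: assumes "\<sigma>\<^sup>2 = 1" "\<forall>i<NN. u i = Lm \<sigma> \<alpha> v i" "c 0 \<le> \<alpha>" "\<alpha> \<le> 1"
  shows "Q u \<le> \<theta> * (1 - 2*\<alpha>*c 0 + \<alpha>\<^sup>2) * Q v"
proof -
  define F where "F = \<theta> * (1 - 2*\<alpha>*c 0 + \<alpha>\<^sup>2)"
  have "Q u = (\<Sum>j\<in>{1..<m}. (1 - 2*\<alpha>*c j + \<alpha>\<^sup>2) * bm v j) + (1-\<alpha>)\<^sup>2 * tr v"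
    using Q_cong[OF assms(2)] by (simp add: Q_def Lm_bm[OF _ assms(1)] Lm_tr)
  also have "\<dots> \<le> (\<Sum>j\<in>{1..<m}. F * bm v j) + F * tr v"
  proof (rule add_mono)
    show "(\<Sum>j\<in>{1..<m}. (1 - 2*\<alpha>*c j + \<alpha>\<^sup>2) * bm v j) \<le> (\<Sum>j\<in>{1..<m}. F * bm v j)"
    proof (rule sum_mono)
      fix j assume "j \<in> {1..<m}"
      then have "1 - 2*\<alpha>*c j + \<alpha>\<^sup>2 \<le> F" unfolding F_def using assms gamma_props(3)[of j]
        by (intro key_ineq) auto
      then show "(1 - 2*\<alpha>*c j + \<alpha>\<^sup>2) * bm v j \<le> F * bm v j" by (rule mult_right_mono) (rule bm_nn)
    qed
    have "(1-\<alpha>)\<^sup>2 \<le> F" unfolding F_def using key_ineq[OF assms(3,4) gamma_props(2)]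
      by (simp add: power2_diff)
    then show "(1-\<alpha>)\<^sup>2 * tr v \<le> F * tr v" by (rule mult_right_mono) (rule tr_nn)
  qed
  also have "\<dots> = F * Q v" by (simp add: Q_def sum_distrib_left algebra_simps)
  finally show ?thesis by (simp add: F_def)
qed

lemma norm_scale:
  assumes "N = vnorm NN u" "w = (\<lambda>i. u i / N)"
  shows "P w = P u / N\<^sup>2" "Q w = Q u / N\<^sup>2" "sq w = sq u / N\<^sup>2" "N\<^sup>2 = P u + Q u"
proof -
  show "P w = P u / N\<^sup>2" by (simp add: assms P_def bm_def power_divide add_divide_distrib)
  show "Q w = Q u / N\<^sup>2" by (simp add: assms Q_def bm_def tr_def power_divide add_divide_distrib sum_divide_distrib)
  show "sq w = sq u / N\<^sup>2" by (simp add: assms sq_def power_divide sum_divide_distrib)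
  show "N\<^sup>2 = P u + Q u" by (simp add: assms vnorm_sq sq_PQ)
qed

lemma half_step:
  assumes "sq v = 1" "P v > 0" "\<sigma>\<^sup>2 = 1" "c 0 \<le> \<alpha>" "\<alpha> \<le> 1" "\<forall>i<NN. u i = Lm \<sigma> \<alpha> v i"
    and w: "w = (\<lambda>i. u i / vnorm NN u)"
  shows "sq w = 1" "P w > 0" "Q w / P w \<le> \<theta> * (Q v / P v)"
proof -
  define N where "N = vnorm NN u"
  define f0 where "f0 = 1 - 2*\<alpha>*c 0 + \<alpha>\<^sup>2"
  have f0: "f0 > 0" using f0_pos by (simp add: f0_def)
  have Pu: "P u = f0 * P v" using half_P[OF assms(3,6)] by (simp add: f0_def)
  have Qu: "Q u \<le> \<theta> * f0 * Q v" using half_Q[OF assms(3,6,4,5)] by (simp add: f0_def)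
  have Pu0: "P u > 0" using Pu f0 assms(2) by simp
  note sc = norm_scale[OF N_def w[folded N_def]]
  have N0: "N\<^sup>2 > 0" using sc(4) Pu0 Q_nn[of u] by linarith
  show "sq w = 1" using sc(3,4) N0 sq_PQ[of u] by simp
  show "P w > 0" using sc(1) N0 Pu0 by simp
  have "Q w / P w = Q u / P u" using N0 Pu0 by (simp add: sc(1,2) field_simps)
  also have "\<dots> \<le> \<theta> * f0 * Q v / P u" using Qu Pu0 by (simp add: divide_right_mono)
  also have "\<dots> = \<theta> * (Q v / P v)" using Pu f0 assms(2) by (simp add: field_simps)
  finally show "Q w / P w \<le> \<theta> * (Q v / P v)" .
qed

lemma alpha_range: assumes "sq v = 1"
  shows "c 0 \<le> dotp NN v (matvec NN AA v)" "dotp NN v (matvec NN AA v) \<le> 1"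
proof -
  have s1: "(\<Sum>j<m. bm v j) + tr v = 1" using assms sq_blocks by simp
  have "(\<Sum>j<m. c 0 * bm v j) \<le> (\<Sum>j<m. c j * bm v j)"
    by (rule sum_mono) (simp add: c_ge0 bm_nn mult_right_mono)
  moreover have "c 0 * tr v \<le> tr v" using c0lt1 c0pos tr_nn[of v] by (intro mult_left_le_one_le) auto
  ultimately have "c 0 * ((\<Sum>j<m. bm v j) + tr v) \<le> (\<Sum>j<m. c j * bm v j) + tr v"
    by (simp add: sum_distrib_left distrib_left)
  then show "c 0 \<le> dotp NN v (matvec NN AA v)" using s1 dot_formula by simp
  have "(\<Sum>j<m. c j * bm v j) \<le> (\<Sum>j<m. bm v j)"
  proof (rule sum_mono)
    fix j assume "j \<in> {..<m}"
    then show "c j * bm v j \<le> bm v j" using c_lt1[of j] c_ge0[of j] c0pos bm_nn[of v j]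
      by (intro mult_left_le_one_le) auto
  qed
  then show "dotp NN v (matvec NN AA v) \<le> 1" using s1 dot_formula by simp
qed

lemma step:
  assumes "sq v = 1" "P v > 0"
  shows "sq (aci_step NN AA v) = 1 \<and> P (aci_step NN AA v) > 0 \<and>
     Q (aci_step NN AA v) / P (aci_step NN AA v) \<le> \<theta>\<^sup>2 * (Q v / P v)"
proof -
  define \<alpha> where "\<alpha> = dotp NN v (matvec NN AA v)"
  define wt where "wt = (\<lambda>i. matvec NN AA v i - \<alpha> * v i)"
  define w where "w = (\<lambda>i. wt i / vnorm NN wt)"
  define \<beta> where "\<beta> = dotp NN w (matvec NN AA w)"
  define vt where "vt = (\<lambda>i. matvec NN (transp AA) w i - \<beta> * w i)"
  have e: "aci_step NN AA v = (\<lambda>i. vt i / vnorm NN vt)"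
    unfolding aci_step_def Let_def \<alpha>_def wt_def w_def \<beta>_def vt_def ..
  have h1: "sq w = 1" "P w > 0" "Q w / P w \<le> \<theta> * (Q v / P v)"
    using half_step[OF assms, of 1 \<alpha> wt w] alpha_range[OF assms(1)] mvA
    by (auto simp: \<alpha>_def wt_def w_def)
  have h2: "sq (aci_step NN AA v) = 1" "P (aci_step NN AA v) > 0"
      "Q (aci_step NN AA v) / P (aci_step NN AA v) \<le> \<theta> * (Q w / P w)"
    using half_step[OF h1(1,2), of "-1" \<beta> vt "aci_step NN AA v"] alpha_range[OF h1(1)] mvAT e
    by (auto simp: \<beta>_def vt_def)
  have "\<theta> * (Q w / P w) \<le> \<theta> * (\<theta> * (Q v / P v))"
    by (rule mult_left_mono[OF h1(3)]) (use theta_props in simp)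
  then show ?thesis using h2 by (simp add: power2_eq_square)
qed

lemma iter:
  assumes "sq v0 = 1" "P v0 > 0"
  shows "sq (aci NN AA v0 k) = 1 \<and> P (aci NN AA v0 k) > 0 \<and>
     Q (aci NN AA v0 k) / P (aci NN AA v0 k) \<le> (\<theta>\<^sup>2)^k * (Q v0 / P v0)"
proof (induction k)
  case 0
  then show ?case using assms by (simp add: aci_def)
next
  case (Suc k)
  have e: "aci NN AA v0 (Suc k) = aci_step NN AA (aci NN AA v0 k)" by (simp add: aci_def)
  define vk where "vk = aci NN AA v0 k"
  have S: "sq (aci_step NN AA vk) = 1 \<and> P (aci_step NN AA vk) > 0 \<and>
     Q (aci_step NN AA vk) / P (aci_step NN AA vk) \<le> \<theta>\<^sup>2 * (Q vk / P vk)"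
    using step[of vk] Suc by (simp add: vk_def)
  have IH: "Q vk / P vk \<le> (\<theta>\<^sup>2)^k * (Q v0 / P v0)" using Suc by (simp add: vk_def)
  have "\<theta>\<^sup>2 * (Q vk / P vk) \<le> \<theta>\<^sup>2 * ((\<theta>\<^sup>2)^k * (Q v0 / P v0))"
    by (rule mult_left_mono[OF IH]) simp
  then show ?case using S unfolding e vk_def[symmetric] by (simp add: mult.assoc)
qed


lemma PQ_cont: assumes "\<forall>i<NN. (\<lambda>k. X k i) \<longlonglongrightarrow> L i"
  shows "(\<lambda>k. Q (X k)) \<longlonglongrightarrow> Q L" "(\<lambda>k. P (X k)) \<longlonglongrightarrow> P L"
proof -
  have h: "\<And>i. i < NN \<Longrightarrow> (\<lambda>k. X k i) \<longlonglongrightarrow> L i" using assms by auto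
  have hb: "\<And>j. j < m \<Longrightarrow> (\<lambda>k. bm (X k) j) \<longlonglongrightarrow> bm L j"
    unfolding bm_def by (intro tendsto_intros h) (auto simp: dimA_def)
  have ht: "(\<lambda>k. tr (X k)) \<longlonglongrightarrow> tr L"
    unfolding tr_def by (cases trail) (auto intro!: tendsto_intros h simp: dimA_def)
  show "(\<lambda>k. Q (X k)) \<longlonglongrightarrow> Q L" unfolding Q_def by (intro tendsto_intros hb ht) auto
  show "(\<lambda>k. P (X k)) \<longlonglongrightarrow> P L" unfolding P_def using hb m1 by auto
qed

lemma limit_props:
  assumes "sq v0 = 1" "P v0 > 0" "\<forall>i<NN. (\<lambda>k. aci NN AA v0 k i) \<longlonglongrightarrow> L i"
  shows "Q L = 0" "P L = 1"
proof -
  define X where "X = aci NN AA v0"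
  define R0 where "R0 = Q v0 / P v0"
  have R0: "0 \<le> R0" using assms Q_nn[of v0] by (simp add: R0_def)
  have bnd: "Q (X k) \<le> (\<theta>\<^sup>2)^k * R0" for k
  proof -
    have it: "sq (X k) = 1" "P (X k) > 0" "Q (X k) / P (X k) \<le> (\<theta>\<^sup>2)^k * R0"
      using iter[OF assms(1,2), of k] by (auto simp: X_def R0_def)
    have "P (X k) \<le> 1" using it(1) sq_PQ[of "X k"] Q_nn[of "X k"] by linarith
    then have "Q (X k) * P (X k) \<le> Q (X k)" using Q_nn[of "X k"] it(2)
      by (intro mult_left_le) auto
    then have "Q (X k) \<le> Q (X k) / P (X k)" using it(2) by (simp add: le_divide_eq)
    then show ?thesis using it(3) by linarith
  qed
  have t0: "(\<lambda>k. (\<theta>\<^sup>2)^k * R0) \<longlonglongrightarrow> 0"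
  proof -
    have "norm (\<theta>\<^sup>2) < 1" using theta_props by (simp add: abs_square_less_1)
    then have "(\<lambda>k. (\<theta>\<^sup>2)^k) \<longlonglongrightarrow> 0" by (rule LIMSEQ_power_zero)
    then show ?thesis by (rule tendsto_mult_left_zero)
  qed
  have tq: "(\<lambda>k. Q (X k)) \<longlonglongrightarrow> 0"
    by (rule real_tendsto_sandwich[where f="\<lambda>_. 0" and h="\<lambda>k. (\<theta>\<^sup>2)^k * R0"])
       (auto simp: Q_nn bnd t0)
  have c: "(\<lambda>k. Q (X k)) \<longlonglongrightarrow> Q L" "(\<lambda>k. P (X k)) \<longlonglongrightarrow> P L"
    using PQ_cont[of X L] assms(3) by (auto simp: X_def)
  show Q0: "Q L = 0" using LIMSEQ_unique[OF c(1) tq] by simp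
  have "P (X k) = 1 - Q (X k)" for k
    using iter[OF assms(1,2), of k] sq_PQ[of "X k"] by (simp add: X_def)
  then have e: "(\<lambda>k. P (X k)) = (\<lambda>k. 1 - Q (X k))" by (intro ext)
  have "(\<lambda>k. P (X k)) \<longlonglongrightarrow> 1 - 0" unfolding e by (intro tendsto_diff tendsto_const tq)
  then show "P L = 1" using LIMSEQ_unique[OF c(2)] by simp
qed

lemma sq_Lm_split: "\<sigma>\<^sup>2 = 1 \<Longrightarrow> sq (Lm \<sigma> \<alpha> v) = (1 - 2*\<alpha>*c 0 + \<alpha>\<^sup>2) * P v
   + ((\<Sum>j\<in>{1..<m}. (1 - 2*\<alpha>*c j + \<alpha>\<^sup>2) * bm v j) + (1-\<alpha>)\<^sup>2 * tr v)"
  by (simp add: sq_Lm sum_split0[of "\<lambda>j. (1 - 2*\<alpha>*c j + \<alpha>\<^sup>2) * bm v j"] P_def add.assoc)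

lemma final_value: assumes "Q L = 0" "P L = 1"
  shows "vnorm NN (\<lambda>i. matvec NN AA L i - c 0 * L i) = sqrt (1 - (c 0)\<^sup>2)"
proof -
  have z: "(\<Sum>j\<in>{1..<m}. bm L j) = 0" "tr L = 0"
    using assms(1) unfolding Q_def by (simp_all add: add_nonneg_eq_0_iff sum_nonneg bm_nn tr_nn)
  then have zj: "\<forall>j\<in>{1..<m}. bm L j = 0" by (simp add: sum_nonneg_eq_0_iff bm_nn)
  have "sq (\<lambda>i. matvec NN AA L i - c 0 * L i) = sq (Lm 1 (c 0) L)"
    by (rule sq_cong) (simp add: mvA)
  also have "\<dots> = 1 - (c 0)\<^sup>2"
    using zj z assms(2) by (simp add: sq_Lm_split power2_eq_square)
  finally show ?thesis by (simp add: vnorm_sq')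
qed

definition "SS \<alpha> = {vnorm NN (matvec NN (\<lambda>i j. AA i j - \<alpha> * idm i j) x) | x. vnorm NN x = 1}"

lemma val_sq: "(vnorm NN (matvec NN (\<lambda>i j. AA i j - \<alpha> * idm i j) x))\<^sup>2 = sq (Lm 1 \<alpha> x)"
  unfolding vnorm_sq by (rule sq_cong) (simp add: mv_shift mvA)

lemma val_sq': "vnorm NN (matvec NN (\<lambda>i j. AA i j - \<alpha> * idm i j) x) = sqrt (sq (Lm 1 \<alpha> x))"
  unfolding vnorm_sq' by (rule arg_cong[where f=sqrt], rule sq_cong) (simp add: mv_shift mvA)

definition "e0 = (\<lambda>i::nat. if i = 0 then 1 else (0::real))"

lemma e0_props: "P e0 = 1" "Q e0 = 0" "vnorm NN e0 = 1"
proof -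
  show p: "P e0 = 1" by (simp add: P_def bm_def e0_def)
  show q: "Q e0 = 0" using m1 by (simp add: Q_def bm_def tr_def e0_def)
  show "vnorm NN e0 = 1" using p q by (simp add: vnorm_sq' sq_PQ)
qed

lemma e0_val: "vnorm NN (matvec NN (\<lambda>i j. AA i j - \<alpha> * idm i j) e0) = sqrt (1 - 2*\<alpha>*c 0 + \<alpha>\<^sup>2)"
proof -
  have "sq (Lm 1 \<alpha> e0) = 1 - 2*\<alpha>*c 0 + \<alpha>\<^sup>2"
  proof -
    have "\<forall>j\<in>{1..<m}. bm e0 j = 0" "tr e0 = 0" using m1 by (auto simp: bm_def tr_def e0_def)
    then have "(\<Sum>j\<in>{1..<m}. (1 - 2*\<alpha>*c j + \<alpha>\<^sup>2) * bm e0 j) = 0" by simp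
    then show ?thesis using e0_props(1) \<open>tr e0 = 0\<close> by (simp only: sq_Lm_split[of 1, simplified]) simp
  qed
  then show ?thesis by (simp only: val_sq')
qed

lemma SS_bdd: "bdd_above (SS \<alpha>)"
proof (rule bdd_aboveI)
  fix y assume "y \<in> SS \<alpha>"
  then obtain x where x: "vnorm NN x = 1" "y = vnorm NN (matvec NN (\<lambda>i j. AA i j - \<alpha> * idm i j) x)"
    by (auto simp: SS_def)
  define K where "K = (1 + \<bar>\<alpha>\<bar>)\<^sup>2"
  have sx: "sq x = 1" using x(1) vnorm_sq[of x] by simp
  have fj: "1 - 2*\<alpha>*c j + \<alpha>\<^sup>2 \<le> K" if "j < m" for j
  proof -
    have "\<bar>c j\<bar> \<le> 1" using c_lt1[OF that] c_ge0[OF that] c0pos by auto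
    then have "\<bar>\<alpha> * c j\<bar> \<le> \<bar>\<alpha>\<bar>" by (simp add: abs_mult mult_left_le)
    then have "- (\<alpha> * c j) \<le> \<bar>\<alpha>\<bar>" by linarith
    moreover have "K = 1 + 2*\<bar>\<alpha>\<bar> + \<alpha>\<^sup>2" by (simp add: K_def power2_eq_square algebra_simps)
    ultimately show ?thesis by linarith
  qed
  have ft: "(1 - \<alpha>)\<^sup>2 \<le> K" unfolding K_def abs_le_square_iff[symmetric] by arith
  have "sq (Lm 1 \<alpha> x) \<le> (\<Sum>j<m. K * bm x j) + K * tr x"
    unfolding sq_Lm[of 1, simplified]
    by (intro add_mono sum_mono mult_right_mono fj ft bm_nn tr_nn) auto
  also have "\<dots> = K" using sx by (simp add: sq_blocks sum_distrib_left[symmetric] distrib_left[symmetric])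
  finally have "y\<^sup>2 \<le> K" using x(2) val_sq by simp
  then show "y \<le> 1 + \<bar>\<alpha>\<bar>" unfolding K_def by (simp add: abs_le_square_iff[symmetric])
qed

lemma SS_c0_le: "y \<in> SS (c 0) \<Longrightarrow> y \<le> sqrt (1 - (c 0)\<^sup>2)"
proof -
  assume "y \<in> SS (c 0)"
  then obtain x where x: "vnorm NN x = 1" "y = vnorm NN (matvec NN (\<lambda>i j. AA i j - c 0 * idm i j) x)"
    by (auto simp: SS_def)
  define K where "K = 1 - (c 0)\<^sup>2"
  have sx: "sq x = 1" using x(1) vnorm_sq[of x] by simp
  have fj: "1 - 2*c 0*c j + (c 0)\<^sup>2 \<le> K" if "j < m" for j
  proof -
    have "c 0 * c 0 \<le> c 0 * c j" using c_ge0[OF that] c0pos by (simp add: mult_left_mono)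
    then show ?thesis by (simp add: K_def power2_eq_square)
  qed
  have ft: "(1 - c 0)\<^sup>2 \<le> K"
  proof -
    have "c 0 * c 0 \<le> c 0 * 1" using c0lt1 c0pos by (intro mult_left_mono) auto
    then show ?thesis by (simp add: K_def power2_eq_square algebra_simps)
  qed
  have "sq (Lm 1 (c 0) x) \<le> (\<Sum>j<m. K * bm x j) + K * tr x"
    unfolding sq_Lm[of 1, simplified]
    by (intro add_mono sum_mono mult_right_mono fj ft bm_nn tr_nn) auto
  also have "\<dots> = K" using sx by (simp add: sq_blocks sum_distrib_left[symmetric] distrib_left[symmetric])
  finally have "y\<^sup>2 \<le> K" using x(2) val_sq by simp
  then show "y \<le> sqrt (1 - (c 0)\<^sup>2)" unfolding K_def using real_le_rsqrt by blast
qed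

lemma opnorm_c0: "opnorm NN (\<lambda>i j. AA i j - c 0 * idm i j) = sqrt (1 - (c 0)\<^sup>2)"
proof -
  have "sqrt (1 - (c 0)\<^sup>2) \<in> SS (c 0)"
    using e0_val[of "c 0"] e0_props(3) unfolding SS_def
    by (auto intro!: exI[of _ e0] simp: power2_eq_square)
  then show ?thesis unfolding opnorm_def SS_def[symmetric]
    by (rule cSup_eq_maximum) (rule SS_c0_le)
qed

lemma opnorm_ge: "sqrt (1 - (c 0)\<^sup>2) \<le> opnorm NN (\<lambda>i j. AA i j - \<alpha> * idm i j)"
proof -
  have m: "sqrt (1 - 2*\<alpha>*c 0 + \<alpha>\<^sup>2) \<in> SS \<alpha>"
    using e0_val[of \<alpha>] e0_props(3) unfolding SS_def by (auto intro!: exI[of _ e0])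
  have "1 - (c 0)\<^sup>2 \<le> 1 - 2*\<alpha>*c 0 + \<alpha>\<^sup>2"
    using zero_le_power2[of "\<alpha> - c 0"] by (simp add: power2_diff)
  then have "sqrt (1 - (c 0)\<^sup>2) \<le> sqrt (1 - 2*\<alpha>*c 0 + \<alpha>\<^sup>2)" by simp
  also have "\<dots> \<le> Sup (SS \<alpha>)" by (rule cSup_upper[OF m SS_bdd])
  finally show ?thesis unfolding opnorm_def SS_def .
qed

lemma INF_part: "(INF \<alpha>. opnorm NN (\<lambda>i j. AA i j - \<alpha> * idm i j)) = opnorm NN (\<lambda>i j. AA i j - c 0 * idm i j)"
  by (rule cInf_eq_minimum[OF rangeI]) (auto simp: opnorm_c0 opnorm_ge)

end

theorem mainTheorem14:
  fixes m :: nat and trail :: bool and c s :: "nat \<Rightarrow> real"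
    and v0 vstar :: "nat \<Rightarrow> real"
  defines "n \<equiv> dimA m trail" and "A \<equiv> blockA m trail c s"
  assumes "m \<ge> 1"
    and "\<forall>j<m. (c j)\<^sup>2 + (s j)\<^sup>2 = 1"
    and "\<forall>j<m. s j \<noteq> 0"
    and "0 < c 0"
    and "\<forall>i j. i < j \<and> j < m \<longrightarrow> c i < c j"
    and "c (m - 1) < 1"
    and "vnorm n v0 = 1"
    and "grade n A v0 \<ge> 2"
    and "v0 0 \<noteq> 0 \<or> v0 1 \<noteq> 0"
    and "\<forall>i<n. (\<lambda>k. aci n A v0 k i) \<longlonglongrightarrow> vstar i"
  shows "(INF \<alpha>. opnorm n (\<lambda>i j. A i j - \<alpha> * idm i j))
           = opnorm n (\<lambda>i j. A i j - c 0 * idm i j)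
       \<and> opnorm n (\<lambda>i j. A i j - c 0 * idm i j)
           = vnorm n (\<lambda>i. matvec n A vstar i - c 0 * vstar i)
       \<and> vnorm n (\<lambda>i. matvec n A vstar i - c 0 * vstar i) = sqrt (1 - (c 0)\<^sup>2)"
proof -
  interpret blk m trail c s
    using assms(3,4,6,7,8) by unfold_locales auto
  have sq0: "sq v0 = 1" using assms(9) vnorm_sq[of v0] by (simp add: n_def)
  have P0: "P v0 > 0" using assms(11) by (auto simp: P_def bm_def add_pos_nonneg add_nonneg_pos)
  have L: "Q vstar = 0" "P vstar = 1" using limit_props[OF sq0 P0] assms(12) by (auto simp: n_def A_def)
  show ?thesis using INF_part opnorm_c0 final_value[OF L] by (simp add: n_def A_def)
qed

end
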